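(* Fix $d,k\in\mathbb N$ and let $A\in\mathbb R^{d^k\times d^k}$ be positive semidefinite. Let $x=x_1\otimes\cdots\otimes x_k$, where $x_1,\dots,x_k\in\mathbb R^d$ are independent and each is either a Rademacher vector or a $\mathcal N(0,I_d)$ Gaussian vector. Then $\operatorname{Var}[x^\top Ax]\le(3^k\operatorname{tr}(A))^2$.
   Context: A Rademacher vector has iid entries uniform on $\{\pm1\}$; $\otimes$ is the Kronecker product. *)

theory Defs
  imports "HOL-Probability.Probability"
begin

text \<open>Vectors in R^n are functions nat => real (entries indexed 0..n-1);
  n x n matrices are functions nat => nat => real (entries indexed by 0..n-1).\<close>

definition psd :: "nat \<Rightarrow> (nat \<Rightarrow> nat \<Rightarrow> real) \<Rightarrow> bool" where
  "psd n A \<longleftrightarrow> (\<forall>i<n. \<forall>j<n. A i j = A j i) \<and>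
     (\<forall>v::nat \<Rightarrow> real. (\<Sum>i<n. \<Sum>j<n. v i * A i j * v j) \<ge> 0)"

definition mtrace :: "nat \<Rightarrow> (nat \<Rightarrow> nat \<Rightarrow> real) \<Rightarrow> real" where
  "mtrace n A = (\<Sum>i<n. A i i)"

definition quad_form :: "nat \<Rightarrow> (nat \<Rightarrow> nat \<Rightarrow> real) \<Rightarrow> (nat \<Rightarrow> real) \<Rightarrow> real" where
  "quad_form n A v = (\<Sum>i<n. \<Sum>j<n. v i * A i j * v j)"

text \<open>Kronecker product x_0 \<otimes> ... \<otimes> x_{k-1} of k vectors in R^d, a vector in R^(d^k):
  entry i (i < d^k) is the product of entries (x_j)_{i_j}, where
  i_0 ... i_{k-1} are the base-d digits of i, most significant first.\<close>

definition kron_vec :: "nat \<Rightarrow> nat \<Rightarrow> (nat \<Rightarrow> nat \<Rightarrow> real) \<Rightarrow> nat \<Rightarrow> real" where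
  "kron_vec d k xs i = (\<Prod>j<k. xs j ((i div d ^ (k - 1 - j)) mod d))"

definition rademacher :: "real measure" where
  "rademacher = measure_pmf (pmf_of_set {-1, 1})"

definition coord_law :: "bool \<Rightarrow> real measure" where
  "coord_law gauss = (if gauss then std_normal_distribution else rademacher)"

definition vec_law :: "nat \<Rightarrow> bool \<Rightarrow> (nat \<Rightarrow> real) measure" where
  "vec_law d gauss = PiM {..<d} (\<lambda>_. coord_law gauss)"

definition joint_law :: "nat \<Rightarrow> nat \<Rightarrow> (nat \<Rightarrow> bool) \<Rightarrow> (nat \<Rightarrow> nat \<Rightarrow> real) measure" where
  "joint_law d k G = PiM {..<k} (\<lambda>j. vec_law d (G j))"

end

theory Submission
  imports Defs
begin


lemma cl_prob: "prob_space (coord_law g)"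
  unfolding coord_law_def rademacher_def
  by (auto simp: prob_space_measure_pmf prob_space_normal_density)

lemma cl_meas[measurable]: "(\<lambda>x. x) \<in> borel_measurable (coord_law g)"
  unfolding coord_law_def rademacher_def by auto

lemma cl_int: "integrable (coord_law g) (\<lambda>x. x ^ n)"
  unfolding coord_law_def rademacher_def
  by (auto simp: integrable_std_normal_distribution_moment integrable_measure_pmf_finite)

definition mom :: "bool \<Rightarrow> nat \<Rightarrow> real" where
  "mom g n = integral\<^sup>L (coord_law g) (\<lambda>x. x ^ n)"

lemma rad_int: "integral\<^sup>L rademacher (f::real\<Rightarrow>real) = (f (-1) + f 1) / 2"
  unfolding rademacher_def by (subst integral_pmf_of_set) auto

lemma mom0: "mom g 0 = 1"
  unfolding mom_def using cl_prob prob_space.prob_space by (simp add: prob_space.prob_space) 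

lemma mom_odd: "odd n \<Longrightarrow> mom g n = 0"
  unfolding mom_def coord_law_def using integral_std_normal_distribution_moment_odd
  by (auto simp: rad_int)

lemma mom2: "mom g 2 = 1"
  unfolding mom_def coord_law_def using std_normal_distribution_even_moments(1)[of 1]
  by (auto simp: rad_int)

lemma mom4: "mom g 4 \<le> 3"
  unfolding mom_def coord_law_def using std_normal_distribution_even_moments(1)[of 2]
  by (auto simp: rad_int fact_numeral)



lemma vl_prob: "prob_space (vec_law d g)"
  unfolding vec_law_def by (intro prob_space_PiM cl_prob)

lemma comp_undef: "j \<notin> J \<Longrightarrow> (\<lambda>x. f (x j)) \<in> borel_measurable (PiM J M)"
  by (subst measurable_cong[where g="\<lambda>_. f undefined"]) (auto simp: space_PiM PiE_def extensional_def)

lemma vl_comp[measurable]: "(\<lambda>y. y a) \<in> borel_measurable (vec_law d g)"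
proof (cases "a < d")
  case True
  show ?thesis unfolding vec_law_def
    using measurable_compose[OF measurable_component_singleton[of a "{..<d}" "\<lambda>_. coord_law g"] cl_meas] True by auto
next
  case False
  then show ?thesis unfolding vec_law_def using comp_undef[of a "{..<d}" "\<lambda>x. x"] by auto
qed

lemma jl_comp[measurable]: "(\<lambda>xs. xs j a) \<in> borel_measurable (PiM J (\<lambda>j. vec_law d (G j)))"
proof (cases "j \<in> J")
  case True
  show ?thesis
    using measurable_compose[OF measurable_component_singleton[of j J "\<lambda>j. vec_law d (G j)"] vl_comp[of a d "G j"]] True by auto
next
  case False
  then show ?thesis using comp_undef[of j J "\<lambda>x. x a"] by auto
qed

definition cnt :: "nat \<Rightarrow> nat \<Rightarrow> nat \<Rightarrow> nat \<Rightarrow> nat \<Rightarrow> nat" where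
  "cnt a b c e u = (if u = a then 1 else 0) + (if u = b then 1 else 0) + (if u = c then 1 else 0) + (if u = e then 1 else 0)"

lemma prod_pow_delta: "(a::nat) < d \<Longrightarrow> (\<Prod>u<d. (t u::real) ^ (if u = a then 1 else 0)) = t a"
proof -
  assume "a < d"
  have "(\<Prod>u<d. (t u::real) ^ (if u = a then 1 else 0)) = (\<Prod>u<d. if u = a then t u else 1)"
    by (rule prod.cong) auto
  also have "\<dots> = (if a = a then t a else 1) * (\<Prod>u\<in>{..<d}-{a}. if u = a then t u else 1)"
    by (rule prod.remove) (use \<open>a<d\<close> in auto)
  also have "(\<Prod>u\<in>{..<d}-{a}. if u = a then t u else 1) = 1"
    by (rule prod.neutral) auto
  also have "(if a = a then t a else 1) * 1 = t a" by simp
  finally show ?thesis .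
qed

lemma prod4: assumes "(a::nat) < d" "b < d" "c < d" "e < d"
  shows "y a * y b * y c * y e = (\<Prod>u<d. (y u::real) ^ cnt a b c e u)"
  unfolding cnt_def power_add prod.distrib using assms by (simp add: prod_pow_delta)

lemma prod_sf: "product_sigma_finite (\<lambda>_. coord_law g)"
  unfolding product_sigma_finite_def
  using cl_prob prob_space_imp_sigma_finite by blast

lemma E4: assumes "a < d" "b < d" "c < d" "e < d"
  shows "integrable (vec_law d g) (\<lambda>y. y a * y b * y c * y e)"
    and "integral\<^sup>L (vec_law d g) (\<lambda>y. y a * y b * y c * y e) = (\<Prod>u<d. mom g (cnt a b c e u))"
proof -
  interpret product_sigma_finite "\<lambda>_. coord_law g" by (rule prod_sf)
  have eq: "(\<lambda>y::nat\<Rightarrow>real. y a * y b * y c * y e) = (\<lambda>y. \<Prod>u\<in>{..<d}. (\<lambda>u t. t ^ cnt a b c e u) u (y u))"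
    by (intro ext) (rule prod4[OF assms])
  show "integrable (vec_law d g) (\<lambda>y. y a * y b * y c * y e)"
    unfolding eq vec_law_def by (rule product_integrable_prod) (auto simp: cl_int)
  show "integral\<^sup>L (vec_law d g) (\<lambda>y. y a * y b * y c * y e) = (\<Prod>u<d. mom g (cnt a b c e u))"
    unfolding eq vec_law_def by (subst product_integral_prod) (auto simp: cl_int mom_def)
qed

definition m' :: "nat \<Rightarrow> nat \<Rightarrow> nat \<Rightarrow> nat \<Rightarrow> real" where
  "m' a b c e = (if a = b \<and> c = e then 1 else 0) + (if a = c \<and> b = e then 1 else 0) + (if a = e \<and> b = c then 1 else 0)"

lemma mom2s: "mom g (Suc (Suc 0)) = 1" using mom2 by (simp add: numeral_2_eq_2)
lemma mom4s: "mom g (Suc (Suc (Suc (Suc 0)))) \<le> 3" using mom4 by (simp add: numeral_eq_Suc)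

lemma P_eq: assumes "a < d" "b < d" "c < d" "e < d"
  shows "(\<Prod>u<d. mom g (cnt a b c e u)) = (\<Prod>u\<in>{a,b,c,e}. mom g (cnt a b c e u))"
  by (rule prod.mono_neutral_right) (use assms in \<open>auto simp: cnt_def mom0\<close>)

lemma P_val: "(\<Prod>u\<in>{a,b,c,e}. mom g (cnt a b c e u)) \<le> m' a b c e \<and>
   (\<not>(a = b \<and> b = c \<and> c = e) \<longrightarrow> (\<Prod>u\<in>{a,b,c,e}. mom g (cnt a b c e u)) = m' a b c e)"
  by (cases "a=b"; cases "a=c"; cases "a=e"; cases "b=c"; cases "b=e"; cases "c=e")
     (auto simp: cnt_def mom0 mom2 mom_odd mom4 m'_def prod.insert_if mom2s mom4s)



lemma sum_if_const: "(\<Sum>c\<in>S. if P then f c else (0::real)) = (if P then (\<Sum>c\<in>S. f c) else 0)"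
  by simp

lemma m'_sum: fixes B :: "nat \<Rightarrow> nat \<Rightarrow> real"
  shows "(\<Sum>a<d. \<Sum>b<d. \<Sum>c<d. \<Sum>e<d. B a b * B c e * m' a b c e)
   = (\<Sum>a<d. B a a)^2 + (\<Sum>a<d. \<Sum>b<d. B a b * B a b) + (\<Sum>a<d. \<Sum>b<d. B a b * B b a)"
proof -
  have "(\<Sum>a<d. \<Sum>b<d. \<Sum>c<d. \<Sum>e<d. B a b * B c e * m' a b c e)
    = (\<Sum>a<d. \<Sum>b<d. \<Sum>c<d. \<Sum>e<d. (if e = c then (if b = a then B a a * B c c else 0) else 0)
         + (if e = b then (if c = a then B a b * B a b else 0) else 0)
         + (if e = a then (if c = b then B a b * B b a else 0) else 0))"
    by (intro sum.cong refl) (auto simp: m'_def)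
  also have "\<dots> = (\<Sum>a<d. \<Sum>b<d. \<Sum>c<d. (if b = a then B a a * B c c else 0)
         + (if c = a then B a b * B a b else 0)
         + (if c = b then B a b * B b a else 0))"
    by (intro sum.cong refl) (simp add: sum.distrib)
  also have "\<dots> = (\<Sum>a<d. \<Sum>b<d. (if b = a then (\<Sum>c<d. B a a * B c c) else 0)
         + B a b * B a b + B a b * B b a)"
    by (intro sum.cong refl) (simp add: sum.distrib sum_if_const)
  also have "\<dots> = (\<Sum>a<d. (\<Sum>c<d. B a a * B c c)
         + (\<Sum>b<d. B a b * B a b) + (\<Sum>b<d. B a b * B b a))"
    by (intro sum.cong refl) (simp add: sum.distrib)
  also have "\<dots> = (\<Sum>a<d. \<Sum>c<d. B a a * B c c) + (\<Sum>a<d. \<Sum>b<d. B a b * B a b) + (\<Sum>a<d. \<Sum>b<d. B a b * B b a)"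
    by (simp add: sum.distrib)
  also have "(\<Sum>a<d. \<Sum>c<d. B a a * B c c) = (\<Sum>a<d. B a a)^2"
    by (simp add: power2_eq_square sum_product)
  finally show ?thesis .
qed

lemma sq_expand: fixes B :: "nat \<Rightarrow> nat \<Rightarrow> real"
  shows "(\<Sum>a<d. \<Sum>b<d. y a * B a b * y b)^2 = (\<Sum>a<d. \<Sum>b<d. \<Sum>c<d. \<Sum>e<d. B a b * B c e * (y a * y b * y c * y e))"
  unfolding power2_eq_square sum_distrib_right unfolding sum_distrib_left
  by (intro sum.cong refl) (simp add: mult_ac)

lemma inner:
  fixes B :: "nat \<Rightarrow> nat \<Rightarrow> real"
  assumes sym: "\<And>a b. a < d \<Longrightarrow> b < d \<Longrightarrow> B a b = B b a"
    and cs: "\<And>a b. a < d \<Longrightarrow> b < d \<Longrightarrow> (B a b)^2 \<le> B a a * B b b"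
    and diag: "\<And>a. a < d \<Longrightarrow> 0 \<le> B a a"
  shows "(\<integral>\<^sup>+y. ennreal ((\<Sum>a<d. \<Sum>b<d. y a * B a b * y b)^2) \<partial>vec_law d g) \<le> ennreal (3 * (\<Sum>a<d. B a a)^2)"
proof -
  let ?M = "vec_law d g"
  let ?P = "\<lambda>a b c e. \<Prod>u<d. mom g (cnt a b c e u)"
  have int1: "integrable ?M (\<lambda>y. B a b * B c e * (y a * y b * y c * y e))"
    if "a < d" "b < d" "c < d" "e < d" for a b c e
    using E4(1)[OF that] by simp
  have int: "integrable ?M (\<lambda>y. \<Sum>a<d. \<Sum>b<d. \<Sum>c<d. \<Sum>e<d. B a b * B c e * (y a * y b * y c * y e))"
    by (intro Bochner_Integration.integrable_sum int1) auto
  have I: "integral\<^sup>L ?M (\<lambda>y. \<Sum>a<d. \<Sum>b<d. \<Sum>c<d. \<Sum>e<d. B a b * B c e * (y a * y b * y c * y e))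
     = (\<Sum>a<d. \<Sum>b<d. \<Sum>c<d. \<Sum>e<d. B a b * B c e * ?P a b c e)"
  proof -
    have "integral\<^sup>L ?M (\<lambda>y. \<Sum>a<d. \<Sum>b<d. \<Sum>c<d. \<Sum>e<d. B a b * B c e * (y a * y b * y c * y e))
      = (\<Sum>a<d. integral\<^sup>L ?M (\<lambda>y. \<Sum>b<d. \<Sum>c<d. \<Sum>e<d. B a b * B c e * (y a * y b * y c * y e)))"
      by (rule Bochner_Integration.integral_sum) (auto intro!: Bochner_Integration.integrable_sum int1)
    also have "\<dots> = (\<Sum>a<d. \<Sum>b<d. integral\<^sup>L ?M (\<lambda>y. \<Sum>c<d. \<Sum>e<d. B a b * B c e * (y a * y b * y c * y e)))"
      by (intro sum.cong refl Bochner_Integration.integral_sum Bochner_Integration.integrable_sum int1; simp)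
    also have "\<dots> = (\<Sum>a<d. \<Sum>b<d. \<Sum>c<d. integral\<^sup>L ?M (\<lambda>y. \<Sum>e<d. B a b * B c e * (y a * y b * y c * y e)))"
      by (intro sum.cong refl Bochner_Integration.integral_sum Bochner_Integration.integrable_sum int1; simp)
    also have "\<dots> = (\<Sum>a<d. \<Sum>b<d. \<Sum>c<d. \<Sum>e<d. integral\<^sup>L ?M (\<lambda>y. B a b * B c e * (y a * y b * y c * y e)))"
      by (intro sum.cong refl Bochner_Integration.integral_sum Bochner_Integration.integrable_sum int1; simp)
    also have "\<dots> = (\<Sum>a<d. \<Sum>b<d. \<Sum>c<d. \<Sum>e<d. B a b * B c e * ?P a b c e)"
      by (intro sum.cong refl) (simp add: E4(2))
    finally show ?thesis .
  qed
  have le: "B a b * B c e * ?P a b c e \<le> B a b * B c e * m' a b c e"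
    if "a < d" "b < d" "c < d" "e < d" for a b c e
  proof (cases "a = b \<and> b = c \<and> c = e")
    case True
    then have "?P a b c e \<le> m' a b c e" using P_val[of g a b c e] P_eq[OF that, of g] by simp
    moreover have "0 \<le> B a b * B c e" using True diag[OF that(1)] by simp
    ultimately show ?thesis by (rule mult_left_mono)
  next
    case False
    then show ?thesis using P_val[of g a b c e] P_eq[OF that, of g] by simp
  qed
  have S: "(\<Sum>a<d. \<Sum>b<d. \<Sum>c<d. \<Sum>e<d. B a b * B c e * ?P a b c e) \<le> 3 * (\<Sum>a<d. B a a)^2"
  proof -
    have "(\<Sum>a<d. \<Sum>b<d. \<Sum>c<d. \<Sum>e<d. B a b * B c e * ?P a b c e)
        \<le> (\<Sum>a<d. \<Sum>b<d. \<Sum>c<d. \<Sum>e<d. B a b * B c e * m' a b c e)"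
      by (intro sum_mono le) auto
    also have "\<dots> = (\<Sum>a<d. B a a)^2 + (\<Sum>a<d. \<Sum>b<d. B a b * B a b) + (\<Sum>a<d. \<Sum>b<d. B a b * B b a)"
      by (rule m'_sum)
    also have "\<dots> \<le> (\<Sum>a<d. B a a)^2 + (\<Sum>a<d. \<Sum>b<d. B a a * B b b) + (\<Sum>a<d. \<Sum>b<d. B a a * B b b)"
    proof -
      have "(\<Sum>a<d. \<Sum>b<d. B a b * B a b) \<le> (\<Sum>a<d. \<Sum>b<d. B a a * B b b)"
        by (intro sum_mono) (use cs in \<open>auto simp: power2_eq_square\<close>)
      moreover have "(\<Sum>a<d. \<Sum>b<d. B a b * B b a) \<le> (\<Sum>a<d. \<Sum>b<d. B a a * B b b)"
        by (intro sum_mono) (use cs sym in \<open>auto simp: power2_eq_square\<close>)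
      ultimately show ?thesis by linarith
    qed
    also have "\<dots> = 3 * (\<Sum>a<d. B a a)^2"
      by (simp add: power2_eq_square sum_product)
    finally show ?thesis .
  qed
  have "(\<integral>\<^sup>+y. ennreal ((\<Sum>a<d. \<Sum>b<d. y a * B a b * y b)^2) \<partial>?M)
      = (\<integral>\<^sup>+y. ennreal (\<Sum>a<d. \<Sum>b<d. \<Sum>c<d. \<Sum>e<d. B a b * B c e * (y a * y b * y c * y e)) \<partial>?M)"
    by (simp only: sq_expand)
  also have "\<dots> = ennreal (integral\<^sup>L ?M (\<lambda>y. \<Sum>a<d. \<Sum>b<d. \<Sum>c<d. \<Sum>e<d. B a b * B c e * (y a * y b * y c * y e)))"
    by (rule nn_integral_eq_integral[OF int]) (auto simp flip: sq_expand)
  also have "\<dots> \<le> ennreal (3 * (\<Sum>a<d. B a a)^2)"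
    using S I by (simp add: ennreal_leI)
  finally show ?thesis .
qed



lemma kron_Suc: "kron_vec d (Suc k) (xs(k:=y)) I = kron_vec d k xs (I div d) * y (I mod d)"
proof -
  have "kron_vec d (Suc k) (xs(k:=y)) I = (\<Prod>j<k. (xs(k:=y)) j ((I div d ^ (Suc k - 1 - j)) mod d)) * y (I mod d)"
    unfolding kron_vec_def by simp
  also have "(\<Prod>j<k. (xs(k:=y)) j ((I div d ^ (Suc k - 1 - j)) mod d)) = kron_vec d k xs (I div d)"
    unfolding kron_vec_def
  proof (intro prod.cong refl)
    fix j assume "j \<in> {..<k}"
    then have j: "j < k" by simp
    then have "Suc k - 1 - j = Suc (k - 1 - j)" by simp
    then have "I div d ^ (Suc k - 1 - j) = I div d div d ^ (k - 1 - j)"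
      by (simp add: div_mult2_eq)
    then show "(xs(k:=y)) j ((I div d ^ (Suc k - 1 - j)) mod d) = xs j ((I div d div d ^ (k - 1 - j)) mod d)"
      using j by simp
  qed
  finally show ?thesis .
qed

lemma sum_add_split: "(\<Sum>I<n + d. f I) = (\<Sum>I<n. f I) + (\<Sum>a<d. f (n + a))"
  for f :: "nat \<Rightarrow> real"
  by (induction d) (simp_all add: add_Suc_right)

lemma sum_split: "(\<Sum>I<m * d. f I) = (\<Sum>p<m. \<Sum>a<d. f (p * d + a))"
  for f :: "nat \<Rightarrow> real"
proof (induction m)
  case 0 then show ?case by simp
next
  case (Suc m)
  have "(\<Sum>I<Suc m * d. f I) = (\<Sum>I<m * d + d. f I)" by (simp add: add.commute)
  also have "\<dots> = (\<Sum>I<m*d. f I) + (\<Sum>a<d. f (m * d + a))" by (rule sum_add_split)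
  finally show ?case using Suc by simp
qed

lemma idx_lt: "p < m \<Longrightarrow> a < d \<Longrightarrow> p * d + a < m * (d::nat)"
proof -
  assume "p < m" "a < d"
  then have "p * d + a < p * d + d" by simp
  also have "\<dots> = (p + 1) * d" by simp
  also have "\<dots> \<le> m * d" using \<open>p < m\<close> by (intro mult_right_mono) auto
  finally show ?thesis .
qed

definition Bm :: "(nat \<Rightarrow> nat \<Rightarrow> real) \<Rightarrow> nat \<Rightarrow> nat \<Rightarrow> (nat \<Rightarrow> real) \<Rightarrow> nat \<Rightarrow> nat \<Rightarrow> real" where
  "Bm A d k z a b = (\<Sum>p<d^k. \<Sum>q<d^k. z p * A (p * d + a) (q * d + b) * z q)"

definition Cm :: "(nat \<Rightarrow> nat \<Rightarrow> real) \<Rightarrow> nat \<Rightarrow> nat \<Rightarrow> nat \<Rightarrow> real" where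
  "Cm A d p q = (\<Sum>a<d. A (p * d + a) (q * d + a))"

lemma quad_split:
  "quad_form (d ^ Suc k) A (\<lambda>I. z (I div d) * v (I mod d)) = (\<Sum>a<d. \<Sum>b<d. v a * Bm A d k z a b * v b)"
proof (cases "d = 0")
  case True then show ?thesis by (simp add: quad_form_def)
next
  case False
  then have d: "d > 0" by simp
  let ?F = "\<lambda>p a q b. z p * v a * A (p * d + a) (q * d + b) * z q * v b"
  have "quad_form (d ^ Suc k) A (\<lambda>I. z (I div d) * v (I mod d))
     = (\<Sum>p<d^k. \<Sum>a<d. \<Sum>q<d^k. \<Sum>b<d. ?F p a q b)"
    unfolding quad_form_def power_Suc2 sum_split using d
    by (intro sum.cong refl) (simp add: mult_ac)
  also have "\<dots> = (\<Sum>a<d. \<Sum>p<d^k. \<Sum>q<d^k. \<Sum>b<d. ?F p a q b)"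
    by (rule sum.swap)
  also have "\<dots> = (\<Sum>a<d. \<Sum>p<d^k. \<Sum>b<d. \<Sum>q<d^k. ?F p a q b)"
    by (rule sum.cong[OF refl], rule sum.cong[OF refl], rule sum.swap)
  also have "\<dots> = (\<Sum>a<d. \<Sum>b<d. \<Sum>p<d^k. \<Sum>q<d^k. ?F p a q b)"
    by (rule sum.cong[OF refl], rule sum.swap)
  also have "\<dots> = (\<Sum>a<d. \<Sum>b<d. v a * Bm A d k z a b * v b)"
    unfolding Bm_def sum_distrib_left sum_distrib_right
    by (intro sum.cong refl) (simp add: mult_ac)
  finally show ?thesis .
qed

lemma trace_C: "mtrace (d ^ k) (Cm A d) = mtrace (d ^ Suc k) A"
  unfolding mtrace_def Cm_def power_Suc2 sum_split by simp

lemma quad_C: "quad_form (d ^ k) (Cm A d) z = (\<Sum>a<d. Bm A d k z a a)"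
proof -
  have "quad_form (d ^ k) (Cm A d) z = (\<Sum>p<d^k. \<Sum>q<d^k. \<Sum>a<d. z p * A (p * d + a) (q * d + a) * z q)"
    unfolding quad_form_def Cm_def sum_distrib_left sum_distrib_right by (simp add: mult_ac)
  also have "\<dots> = (\<Sum>p<d^k. \<Sum>a<d. \<Sum>q<d^k. z p * A (p * d + a) (q * d + a) * z q)"
    by (rule sum.cong[OF refl], rule sum.swap)
  also have "\<dots> = (\<Sum>a<d. \<Sum>p<d^k. \<Sum>q<d^k. z p * A (p * d + a) (q * d + a) * z q)"
    by (rule sum.swap)
  finally show ?thesis unfolding Bm_def .
qed

lemma twobytwo:
  fixes x y z :: real
  assumes H: "\<And>s t. 0 \<le> s * s * x + 2 * s * t * y + t * t * z"
  shows "y^2 \<le> x * z"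
proof -
  have z0: "0 \<le> z" using H[of 0 1] by simp
  show ?thesis
  proof (cases "z = 0")
    case False
    then have zp: "z > 0" using z0 by simp
    have "0 \<le> z * z * x + 2 * z * (-y) * y + (-y) * (-y) * z" by (rule H)
    also have "\<dots> = z * (x * z - y^2)" by (simp add: algebra_simps power2_eq_square)
    finally have "0 \<le> x * z - y^2" using zp by (simp add: zero_le_mult_iff)
    then show ?thesis by simp
  next
    case True
    have "y = 0"
    proof (rule ccontr)
      assume "y \<noteq> 0"
      have "0 \<le> 1 * 1 * x + 2 * 1 * (-(x+1)/(2*y)) * y + (-(x+1)/(2*y)) * (-(x+1)/(2*y)) * z" by (rule H)
      also have "\<dots> = -1" using \<open>y \<noteq> 0\<close> True by (simp add: field_simps)
      finally show False by simp
    qed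
    then show ?thesis using True by simp
  qed
qed

lemma sum2:
  fixes f :: "nat \<Rightarrow> real"
  assumes "a < d" "b < d" "a \<noteq> b"
  shows "(\<Sum>w<d. ((if w = a then s else 0) + (if w = b then t else 0)) * f w) = s * f a + t * f b"
proof -
  have "(\<Sum>w<d. ((if w = a then s else 0) + (if w = b then t else 0)) * f w)
      = (\<Sum>w<d. (if w = a then s * f w else 0) + (if w = b then t * f w else 0))"
    by (rule sum.cong) (auto simp: distrib_right)
  also have "\<dots> = (\<Sum>w<d. (if w = a then s * f w else 0)) + (\<Sum>w<d. (if w = b then t * f w else 0))"
    by (rule sum.distrib)
  also have "\<dots> = s * f a + t * f b" using assms by simp
  finally show ?thesis .
qed

lemma sum1:
  fixes f :: "nat \<Rightarrow> real"
  assumes "a < d"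
  shows "(\<Sum>w<d. (if w = a then 1 else 0) * f w) = f a"
proof -
  have "(\<Sum>w<d. (if w = a then 1 else 0) * f w) = (\<Sum>w<d. if w = a then f w else 0)"
    by (rule sum.cong) auto
  also have "\<dots> = f a" using assms by simp
  finally show ?thesis .
qed

lemma vsum2:
  fixes B :: "nat \<Rightarrow> nat \<Rightarrow> real"
  assumes "a < d" "b < d" "a \<noteq> b"
  shows "(\<Sum>u<d. \<Sum>w<d. ((if u = a then s else 0) + (if u = b then t else 0)) * B u w *
            ((if w = a then s else 0) + (if w = b then t else 0)))
       = s * s * B a a + s * t * B a b + t * s * B b a + t * t * B b b"
proof -
  have "(\<Sum>u<d. \<Sum>w<d. ((if u = a then s else 0) + (if u = b then t else 0)) * B u w *
            ((if w = a then s else 0) + (if w = b then t else 0)))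
     = (\<Sum>u<d. ((if u = a then s else 0) + (if u = b then t else 0)) *
          (\<Sum>w<d. ((if w = a then s else 0) + (if w = b then t else 0)) * B u w))"
    by (simp add: sum_distrib_left mult_ac)
  also have "\<dots> = (\<Sum>u<d. ((if u = a then s else 0) + (if u = b then t else 0)) * (s * B u a + t * B u b))"
    by (simp only: sum2[OF assms])
  also have "\<dots> = s * (s * B a a + t * B a b) + t * (s * B b a + t * B b b)"
    by (rule sum2[OF assms])
  finally show ?thesis by (simp add: algebra_simps)
qed

lemma vsum1:
  fixes B :: "nat \<Rightarrow> nat \<Rightarrow> real"
  assumes "a < d"
  shows "(\<Sum>u<d. \<Sum>w<d. (if u = a then 1 else 0) * B u w * (if w = a then 1 else 0)) = B a a"
proof -
  have "(\<Sum>u<d. \<Sum>w<d. (if u = a then 1 else 0) * B u w * (if w = a then 1 else 0))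
     = (\<Sum>u<d. (if u = a then 1 else 0) * (\<Sum>w<d. (if w = a then 1 else 0) * B u w))"
    by (simp add: sum_distrib_left mult_ac)
  also have "\<dots> = (\<Sum>u<d. (if u = a then 1 else 0) * B u a)"
    by (simp only: sum1[OF assms])
  also have "\<dots> = B a a" by (rule sum1[OF assms])
  finally show ?thesis .
qed

context
  fixes A :: "nat \<Rightarrow> nat \<Rightarrow> real" and d k :: nat
  assumes psdA: "psd (d ^ Suc k) A"
begin

lemma Bm_psd: "0 \<le> (\<Sum>a<d. \<Sum>b<d. v a * Bm A d k z a b * v b)"
proof -
  have H: "\<forall>v. 0 \<le> quad_form (d ^ Suc k) A v"
    using psdA unfolding psd_def quad_form_def by blast
  have "0 \<le> quad_form (d ^ Suc k) A (\<lambda>I. z (I div d) * v (I mod d))"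
    using H by blast
  then show ?thesis by (simp only: quad_split)
qed

lemma Bm_sym: assumes "a < d" "b < d" shows "Bm A d k z a b = Bm A d k z b a"
proof -
  have symA: "\<And>i j. i < d ^ Suc k \<Longrightarrow> j < d ^ Suc k \<Longrightarrow> A i j = A j i"
    using psdA unfolding psd_def by blast
  have "Bm A d k z a b = (\<Sum>q<d^k. \<Sum>p<d^k. z p * A (p * d + a) (q * d + b) * z q)"
    unfolding Bm_def by (rule sum.swap)
  also have "\<dots> = Bm A d k z b a"
    unfolding Bm_def
  proof (intro sum.cong refl)
    fix p q assume "p \<in> {..<d^k}" "q \<in> {..<d^k}"
    then have "p * d + a < d ^ Suc k" "q * d + b < d ^ Suc k"
      using idx_lt[of p "d^k" a d] idx_lt[of q "d^k" b d] assms by (auto simp: mult.commute)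
    then have "A (p * d + a) (q * d + b) = A (q * d + b) (p * d + a)" by (rule symA)
    then show "z p * A (p * d + a) (q * d + b) * z q = z q * A (q * d + b) (p * d + a) * z p"
      by simp
  qed
  finally show ?thesis .
qed

lemma Bm_diag: assumes "a < d" shows "0 \<le> Bm A d k z a a"
  using Bm_psd[of "\<lambda>u. if u = a then 1 else 0" z] vsum1[OF assms, of "Bm A d k z"] by simp

lemma Bm_cs: assumes "a < d" "b < d" shows "(Bm A d k z a b)^2 \<le> Bm A d k z a a * Bm A d k z b b"
proof (cases "a = b")
  case True then show ?thesis by (simp add: power2_eq_square)
next
  case False
  show ?thesis
  proof (rule twobytwo)
    fix s t :: real
    have "0 \<le> (\<Sum>u<d. \<Sum>w<d. ((if u = a then s else 0) + (if u = b then t else 0)) * Bm A d k z u w *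
            ((if w = a then s else 0) + (if w = b then t else 0)))"
      by (rule Bm_psd)
    also have "\<dots> = s * s * Bm A d k z a a + s * t * Bm A d k z a b + t * s * Bm A d k z b a + t * t * Bm A d k z b b"
      by (rule vsum2[OF assms False])
    also have "\<dots> = s * s * Bm A d k z a a + 2 * s * t * Bm A d k z a b + t * t * Bm A d k z b b"
      using Bm_sym[OF assms(2,1)] by (simp add: algebra_simps)
    finally show "0 \<le> s * s * Bm A d k z a a + 2 * s * t * Bm A d k z a b + t * t * Bm A d k z b b" .
  qed
qed

lemma C_psd: "psd (d ^ k) (Cm A d)"
proof -
  have symA: "\<And>i j. i < d ^ Suc k \<Longrightarrow> j < d ^ Suc k \<Longrightarrow> A i j = A j i"
    using psdA unfolding psd_def by blast
  have "\<forall>i<d^k. \<forall>j<d^k. Cm A d i j = Cm A d j i"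
    unfolding Cm_def
  proof (intro allI impI sum.cong refl)
    fix i j a assume "i < d^k" "j < d^k" "a \<in> {..<d}"
    then have "i * d + a < d ^ Suc k" "j * d + a < d ^ Suc k"
      using idx_lt[of i "d^k" a d] idx_lt[of j "d^k" a d] by (auto simp: mult.commute)
    then show "A (i * d + a) (j * d + a) = A (j * d + a) (i * d + a)" by (rule symA)
  qed
  moreover have "0 \<le> (\<Sum>i<d^k. \<Sum>j<d^k. v i * Cm A d i j * v j)" for v
  proof -
    have "0 \<le> (\<Sum>a<d. Bm A d k v a a)" by (rule sum_nonneg) (simp add: Bm_diag)
    then show ?thesis using quad_C[of d k A v] by (simp add: quad_form_def)
  qed
  ultimately show ?thesis unfolding psd_def by blast
qed

end



lemma jl_prob: "prob_space (joint_law d k G)"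
  unfolding joint_law_def by (intro prob_space_PiM vl_prob)

lemma X_meas[measurable]: "(\<lambda>xs. quad_form n A (kron_vec d k xs)) \<in> borel_measurable (PiM J (\<lambda>j. vec_law d (G j)))"
  unfolding quad_form_def kron_vec_def by measurable

lemma main: "psd (d^k) A \<Longrightarrow>
  (\<integral>\<^sup>+xs. ennreal ((quad_form (d^k) A (kron_vec d k xs))^2) \<partial>joint_law d k G) \<le> ennreal (3^k * (mtrace (d^k) A)^2)"
proof (induction k arbitrary: A)
  case 0
  interpret prob_space "joint_law d 0 G" by (rule jl_prob)
  have "\<And>xs. quad_form (d^0) A (kron_vec d 0 xs) = A 0 0" by (simp add: quad_form_def kron_vec_def)
  then show ?case by (simp add: mtrace_def emeasure_space_1)
next
  case (Suc k)
  interpret product_sigma_finite "\<lambda>j. vec_law d (G j)"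
    unfolding product_sigma_finite_def using vl_prob prob_space_imp_sigma_finite by blast
  have eqM: "joint_law d (Suc k) G = PiM (insert k {..<k}) (\<lambda>j. vec_law d (G j))"
    unfolding joint_law_def by (simp add: lessThan_Suc)
  have meas: "(\<lambda>xs. ennreal ((quad_form (d^Suc k) A (kron_vec d (Suc k) xs))^2)) \<in> borel_measurable (PiM (insert k {..<k}) (\<lambda>j. vec_law d (G j)))"
    by measurable
  have meas2: "(\<lambda>xs. ennreal ((quad_form (d^k) (Cm A d) (kron_vec d k xs))^2)) \<in> borel_measurable (PiM {..<k} (\<lambda>j. vec_law d (G j)))"
    by measurable
  have "(\<integral>\<^sup>+xs. ennreal ((quad_form (d^Suc k) A (kron_vec d (Suc k) xs))^2) \<partial>joint_law d (Suc k) G)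
     = (\<integral>\<^sup>+x. (\<integral>\<^sup>+y. ennreal ((quad_form (d^Suc k) A (kron_vec d (Suc k) (x(k:=y))))^2) \<partial>vec_law d (G k)) \<partial>PiM {..<k} (\<lambda>j. vec_law d (G j)))"
    unfolding eqM by (rule product_nn_integral_insert[OF _ _ meas]) auto
  also have "\<dots> \<le> (\<integral>\<^sup>+x. ennreal (3 * (quad_form (d^k) (Cm A d) (kron_vec d k x))^2) \<partial>PiM {..<k} (\<lambda>j. vec_law d (G j)))"
  proof (rule nn_integral_mono)
    fix x
    have kr: "\<And>y. kron_vec d (Suc k) (x(k:=y)) = (\<lambda>I. kron_vec d k x (I div d) * y (I mod d))"
      by (rule ext, rule kron_Suc)
    have "(\<integral>\<^sup>+y. ennreal ((quad_form (d^Suc k) A (kron_vec d (Suc k) (x(k:=y))))^2) \<partial>vec_law d (G k))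
       = (\<integral>\<^sup>+y. ennreal ((\<Sum>a<d. \<Sum>b<d. y a * Bm A d k (kron_vec d k x) a b * y b)^2) \<partial>vec_law d (G k))"
      by (simp only: kr quad_split)
    also have "\<dots> \<le> ennreal (3 * (\<Sum>a<d. Bm A d k (kron_vec d k x) a a)^2)"
      by (rule inner[OF Bm_sym[OF Suc.prems] Bm_cs[OF Suc.prems] Bm_diag[OF Suc.prems]])
    also have "\<dots> = ennreal (3 * (quad_form (d^k) (Cm A d) (kron_vec d k x))^2)"
      by (simp add: quad_C)
    finally show "(\<integral>\<^sup>+y. ennreal ((quad_form (d^Suc k) A (kron_vec d (Suc k) (x(k:=y))))^2) \<partial>vec_law d (G k))
        \<le> ennreal (3 * (quad_form (d^k) (Cm A d) (kron_vec d k x))^2)" .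
  qed
  also have "\<dots> = (\<integral>\<^sup>+x. 3 * ennreal ((quad_form (d^k) (Cm A d) (kron_vec d k x))^2) \<partial>PiM {..<k} (\<lambda>j. vec_law d (G j)))"
    by (intro nn_integral_cong) (simp add: ennreal_mult)
  also have "\<dots> = 3 * (\<integral>\<^sup>+x. ennreal ((quad_form (d^k) (Cm A d) (kron_vec d k x))^2) \<partial>joint_law d k G)"
    unfolding joint_law_def by (rule nn_integral_cmult[OF meas2])
  also have "\<dots> \<le> 3 * ennreal (3^k * (mtrace (d^k) (Cm A d))^2)"
    by (rule mult_left_mono[OF Suc.IH[OF C_psd[OF Suc.prems]]]) simp
  also have "\<dots> = ennreal (3^Suc k * (mtrace (d^Suc k) A)^2)"
    by (simp add: trace_C ennreal_mult mult.assoc)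
  finally show ?case .
qed

theorem theorem4:
  fixes d k :: nat and A :: "nat \<Rightarrow> nat \<Rightarrow> real" and G :: "nat \<Rightarrow> bool"
  assumes "psd (d ^ k) A"
  shows "prob_space.variance (joint_law d k G)
           (\<lambda>xs. quad_form (d ^ k) A (kron_vec d k xs))
         \<le> (3 ^ k * mtrace (d ^ k) A)\<^sup>2"
proof -
  let ?M = "joint_law d k G"
  let ?X = "\<lambda>xs. quad_form (d ^ k) A (kron_vec d k xs)"
  let ?T = "mtrace (d ^ k) A"
  interpret prob_space ?M by (rule jl_prob)
  have Xm: "?X \<in> borel_measurable ?M" unfolding joint_law_def by (rule X_meas)
  have N: "(\<integral>\<^sup>+xs. ennreal ((?X xs)^2) \<partial>?M) \<le> ennreal (3^k * ?T^2)" by (rule main[OF assms])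
  have fin: "(\<integral>\<^sup>+xs. ennreal (norm ((?X xs)^2)) \<partial>?M) < \<infinity>"
    using le_less_trans[OF N ennreal_less_top] by simp
  have int2: "integrable ?M (\<lambda>xs. (?X xs)^2)"
    unfolding integrable_iff_bounded using Xm fin by simp
  have int1: "integrable ?M ?X" by (rule square_integrable_imp_integrable[OF Xm int2])
  have V: "variance ?X = expectation (\<lambda>xs. (?X xs)^2) - (expectation ?X)^2"
    by (rule variance_eq[OF int1 int2])
  have E: "expectation (\<lambda>xs. (?X xs)^2) \<le> 3^k * ?T^2"
  proof -
    have "ennreal (expectation (\<lambda>xs. (?X xs)^2)) = (\<integral>\<^sup>+xs. ennreal ((?X xs)^2) \<partial>?M)"
      by (rule nn_integral_eq_integral[OF int2, symmetric]) simp
    then have "ennreal (expectation (\<lambda>xs. (?X xs)^2)) \<le> ennreal (3^k * ?T^2)" using N by simp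
    then show ?thesis by (simp add: ennreal_le_iff)
  qed
  have P: "(3::real)^k * ?T^2 \<le> (3^k * ?T)^2"
  proof -
    have "(1::real) \<le> 3^k" by simp
    then have "(3::real)^k * 1 \<le> 3^k * 3^k" by (intro mult_left_mono) auto
    then have "(3::real)^k * ?T^2 \<le> (3^k * 3^k) * ?T^2" by (intro mult_right_mono) auto
    moreover have "(3^k * ?T)^2 = (3^k * 3^k) * ?T^2" by (simp add: power_mult_distrib power2_eq_square)
    ultimately show ?thesis by simp
  qed
  have "variance ?X \<le> expectation (\<lambda>xs. (?X xs)^2)" using V by simp
  then show ?thesis using E P by linarith
qed


end
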